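(* Let $S=\{1,\dots,n\}$, $C=\{1,\dots,m\}$, bandwidths $\mathcal{U}=(U_s)_{s\in S}$ with $U_s>0$, memory sizes $\mathcal{D}=(d_s)_{s\in S}$ with integers $d_s\ge1$, and popularities $\Lambda=(\lambda_c)_{c\in C}$ with $\lambda_c\ge 0$. Let $\mathtt{JAM}^*(\mathcal{U},\Lambda,\mathcal{D})$ denote the optimal value of \[ \max_{Z=(z_{sc})}\ \sum_{s\in S}\sum_{c\in C} z_{sc}\ \text{ s.t. } \sum_{c}z_{sc}\le U_s\ \forall s,\ \sum_{s}z_{sc}\le\lambda_c\ \forall c,\ \sum_{c}\mathbb{1}(z_{sc}>0)\le d_s\ \forall s,\ z_{sc}\ge 0. \] Consider the following \texttt{greedy} algorithm. Initialize $\mathsf{flow}(s)=U_s$, $\mathsf{deg}(s)=d_s$ for all $s\in S$, $\mathsf{flow}(c)=\lambda_c$ for all $c\in C$, and $z_{sc}=0$, $a_{sc}=0$ for all $(s,c)$. While there exists $(s,c)\in S\times C$ with $\mathsf{flow}(s)\,\mathsf{deg}(s)\,\mathsf{flow}(c)>0$: choose $s^*\in\arg\max_{s\in S:\mathsf{deg}(s)>0}\mathsf{flow}(s)$ and $c^*\in\arg\max_{c\in C}\mathsf{flow}(c)$ (ties broken arbitrarily), set $f=\min(\mathsf{flow}(s^* ),\mathsf{flow}(c^* ))$, decrease $\mathsf{flow}(s^* )$ and $\mathsf{flow}(c^* )$ by $f$, decrease $\mathsf{deg}(s^* )$ by $1$, and set $a_{s^*c^*}=1$, $z_{s^*c^*}=f$.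 The output value of the algorithm is the total matched flow $\sum_{s,c}z_{sc}$ (the sum of the values $f$ over all iterations). Then the output value of \texttt{greedy} on this instance is at least $\frac{1}{2}\mathtt{JAM}^*(\mathcal{U},\Lambda,\mathcal{D})$.
   Context: $\mathbb{1}(\cdot)$ denotes the indicator function. *)

theory Defs
  imports Complex_Main
begin

definition jam_feasible ::
  "nat \<Rightarrow> nat \<Rightarrow> (nat \<Rightarrow> real) \<Rightarrow> (nat \<Rightarrow> real) \<Rightarrow> (nat \<Rightarrow> nat)
    \<Rightarrow> (nat \<Rightarrow> nat \<Rightarrow> real) \<Rightarrow> bool" where
  "jam_feasible n m U lam d Z \<longleftrightarrow>
     (\<forall>s\<in>{1..n}. (\<Sum>c\<in>{1..m}. Z s c) \<le> U s) \<and>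
     (\<forall>c\<in>{1..m}. (\<Sum>s\<in>{1..n}. Z s c) \<le> lam c) \<and>
     (\<forall>s\<in>{1..n}. (\<Sum>c\<in>{1..m}. (if Z s c > 0 then 1 else 0 :: nat)) \<le> d s) \<and>
     (\<forall>s\<in>{1..n}. \<forall>c\<in>{1..m}. Z s c \<ge> 0)"

definition jam_obj :: "nat \<Rightarrow> nat \<Rightarrow> (nat \<Rightarrow> nat \<Rightarrow> real) \<Rightarrow> real" where
  "jam_obj n m Z = (\<Sum>s\<in>{1..n}. \<Sum>c\<in>{1..m}. Z s c)"

text \<open>Optimal value JAM*(U, Lambda, D) (the supremum, which is attained).\<close>
definition JAM_opt ::
  "nat \<Rightarrow> nat \<Rightarrow> (nat \<Rightarrow> real) \<Rightarrow> (nat \<Rightarrow> real) \<Rightarrow> (nat \<Rightarrow> nat) \<Rightarrow> real" where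
  "JAM_opt n m U lam d = Sup {jam_obj n m Z | Z. jam_feasible n m U lam d Z}"

text \<open>Greedy state: (flow on servers, remaining degree of servers, flow on contents,
  total matched flow so far = sum of the values f over all iterations).\<close>
type_synonym greedy_state = "(nat \<Rightarrow> real) \<times> (nat \<Rightarrow> nat) \<times> (nat \<Rightarrow> real) \<times> real"

definition greedy_loop_cond :: "nat \<Rightarrow> nat \<Rightarrow> greedy_state \<Rightarrow> bool" where
  "greedy_loop_cond n m st = (case st of (fS, dg, fC, tot) \<Rightarrow>
     (\<exists>s\<in>{1..n}. \<exists>c\<in>{1..m}. fS s * real (dg s) * fC c > 0))"

text \<open>One iteration of the while loop, with arbitrary tie breaking (nondeterministic).\<close>
definition greedy_step :: "nat \<Rightarrow> nat \<Rightarrow> greedy_state \<Rightarrow> greedy_state \<Rightarrow> bool" where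
  "greedy_step n m st st' = (case st of (fS, dg, fC, tot) \<Rightarrow>
     greedy_loop_cond n m st \<and>
     (\<exists>s' c' f. s' \<in> {1..n} \<and> dg s' > 0 \<and>
        (\<forall>s\<in>{1..n}. dg s > 0 \<longrightarrow> fS s \<le> fS s') \<and>
        c' \<in> {1..m} \<and> (\<forall>c\<in>{1..m}. fC c \<le> fC c') \<and>
        f = min (fS s') (fC c') \<and>
        st' = (fS(s' := fS s' - f), dg(s' := dg s' - 1), fC(c' := fC c' - f), tot + f)))"

definition greedy_init :: "(nat \<Rightarrow> real) \<Rightarrow> (nat \<Rightarrow> real) \<Rightarrow> (nat \<Rightarrow> nat) \<Rightarrow> greedy_state" where
  "greedy_init U lam d = (U, d, lam, 0)"

end

theory Submission
  imports Defs
begin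

definition ginv :: "nat \<Rightarrow> nat \<Rightarrow> (nat \<Rightarrow> real) \<Rightarrow> (nat \<Rightarrow> real) \<Rightarrow> (nat \<Rightarrow> nat)
   \<Rightarrow> greedy_state \<Rightarrow> bool" where
  "ginv n m U lam d st = (case st of (fS, dg, fC, tot) \<Rightarrow>
     (\<forall>s\<in>{1..n}. 0 \<le> fS s \<and> fS s \<le> U s \<and> dg s \<le> d s \<and>
        (\<forall>c\<in>{1..m}. fS s > 0 \<longrightarrow> real (d s - dg s) * fC c \<le> U s - fS s)) \<and>
     (\<forall>c\<in>{1..m}. 0 \<le> fC c \<and> fC c \<le> lam c) \<and>
     tot = (\<Sum>s\<in>{1..n}. U s - fS s) \<and>
     tot = (\<Sum>c\<in>{1..m}. lam c - fC c))"

lemma sum_upd_diff: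
  assumes "i \<in> A" "finite A"
  shows "(\<Sum>s\<in>A. U s - (g(i := g i - f)) s) = (\<Sum>s\<in>A. U s - g s) + (f::real)"
proof -
  have "(\<Sum>s\<in>A. U s - (g(i := g i - f)) s) = (\<Sum>s\<in>A. (U s - g s) + (if s = i then f else 0))"
    by (rule sum.cong) auto
  also have "\<dots> = (\<Sum>s\<in>A. U s - g s) + f"
    using assms by (simp add: sum.distrib)
  finally show ?thesis .
qed

lemma ginv_init:
  assumes "\<forall>s\<in>{1..n}. U s > 0" "\<forall>c\<in>{1..m}. lam c \<ge> 0"
  shows "ginv n m U lam d (greedy_init U lam d)"
  using assms unfolding ginv_def greedy_init_def by (auto simp: less_imp_le)

lemma ginv_step:
  assumes st: "greedy_step n m (fS, dg, fC, tot) st'"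
    and inv: "ginv n m U lam d (fS, dg, fC, tot)"
  shows "ginv n m U lam d st'"
proof -
  obtain s' c' f where s': "s' \<in> {1..n}" "dg s' > 0"
    and c': "c' \<in> {1..m}" "\<forall>c\<in>{1..m}. fC c \<le> fC c'"
    and f: "f = min (fS s') (fC c')"
    and st'eq: "st' = (fS(s' := fS s' - f), dg(s' := dg s' - 1), fC(c' := fC c' - f), tot + f)"
    using st unfolding greedy_step_def by auto
  have I1: "\<forall>s\<in>{1..n}. 0 \<le> fS s \<and> fS s \<le> U s \<and> dg s \<le> d s \<and>
        (\<forall>c\<in>{1..m}. fS s > 0 \<longrightarrow> real (d s - dg s) * fC c \<le> U s - fS s)"
    and I2: "\<forall>c\<in>{1..m}. 0 \<le> fC c \<and> fC c \<le> lam c"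
    and I3: "tot = (\<Sum>s\<in>{1..n}. U s - fS s)"
    and I4: "tot = (\<Sum>c\<in>{1..m}. lam c - fC c)"
    using inv unfolding ginv_def by auto
  have f0: "0 \<le> f" using f I1 I2 s' c' by auto
  have fle1: "f \<le> fS s'" "f \<le> fC c'" using f by auto
  define fS' where "fS' = fS(s' := fS s' - f)"
  define dg' where "dg' = dg(s' := dg s' - 1)"
  define fC' where "fC' = fC(c' := fC c' - f)"
  have fCle: "\<forall>c\<in>{1..m}. fC' c \<le> fC c" using f0 unfolding fC'_def by auto
  have J1: "\<forall>s\<in>{1..n}. 0 \<le> fS' s \<and> fS' s \<le> U s \<and> dg' s \<le> d s \<and>
        (\<forall>c\<in>{1..m}. fS' s > 0 \<longrightarrow> real (d s - dg' s) * fC' c \<le> U s - fS' s)"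
  proof
    fix s assume s: "s \<in> {1..n}"
    show "0 \<le> fS' s \<and> fS' s \<le> U s \<and> dg' s \<le> d s \<and>
        (\<forall>c\<in>{1..m}. fS' s > 0 \<longrightarrow> real (d s - dg' s) * fC' c \<le> U s - fS' s)"
    proof (cases "s = s'")
      case False
      have "\<forall>c\<in>{1..m}. fS' s > 0 \<longrightarrow> real (d s - dg' s) * fC' c \<le> U s - fS' s"
      proof (intro ballI impI)
        fix c assume c: "c \<in> {1..m}" and p: "fS' s > 0"
        have "real (d s - dg' s) * fC' c \<le> real (d s - dg s) * fC c"
          using False fCle c unfolding dg'_def by (auto intro: mult_left_mono)
        also have "\<dots> \<le> U s - fS s" using I1 s c p False unfolding fS'_def by auto
        finally show "real (d s - dg' s) * fC' c \<le> U s - fS' s" using False unfolding fS'_def by simp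
      qed
      moreover have "0 \<le> fS' s \<and> fS' s \<le> U s \<and> dg' s \<le> d s"
        using I1 s False unfolding fS'_def dg'_def by auto
      ultimately show ?thesis by blast
    next
      case True
      have "\<forall>c\<in>{1..m}. fS' s > 0 \<longrightarrow> real (d s - dg' s) * fC' c \<le> U s - fS' s"
      proof (intro ballI impI)
        fix c assume c: "c \<in> {1..m}" and p: "fS' s > 0"
        have pos: "fS s' > 0" using p True f0 unfolding fS'_def by auto
        have ff: "f = fC c'" using p True f unfolding fS'_def by auto
        have dle: "dg s' \<le> d s'" using I1 s' by auto
        have "d s - dg' s = (d s - dg s) + 1"
          using True s' dle unfolding dg'_def by auto
        then have dd: "real (d s - dg' s) = real (d s - dg s) + 1" by simp
        have "real (d s - dg' s) * fC' c \<le> (real (d s - dg s) + 1) * fC c'"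
          unfolding dd
        proof (rule mult_left_mono)
          have "fC' c \<le> fC c" using fCle c by blast
          also have "fC c \<le> fC c'" using c' c by blast
          finally show "fC' c \<le> fC c'" .
        qed simp
        also have "\<dots> = real (d s - dg s) * fC c' + f" using ff by (simp add: algebra_simps)
        also have "\<dots> \<le> U s - fS s + f" using I1 s c' pos True by auto
        finally show "real (d s - dg' s) * fC' c \<le> U s - fS' s" using True unfolding fS'_def by simp
      qed
      moreover have dle2: "dg s' \<le> d s'" using I1 s' by auto
      moreover have "0 \<le> fS' s \<and> fS' s \<le> U s \<and> dg' s \<le> d s"
        using I1 s True f0 fle1 dle2 unfolding fS'_def dg'_def by (auto simp del: atLeastAtMost_iff)
      ultimately show ?thesis by blast
    qed
  qed
  have J2: "\<forall>c\<in>{1..m}. 0 \<le> fC' c \<and> fC' c \<le> lam c"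
    using I2 f0 fle1 c' unfolding fC'_def by (auto simp del: atLeastAtMost_iff)
  have J3: "tot + f = (\<Sum>s\<in>{1..n}. U s - fS' s)"
    unfolding fS'_def using sum_upd_diff[of s' "{1..n}" U fS f] s' I3 by simp
  have J4: "tot + f = (\<Sum>c\<in>{1..m}. lam c - fC' c)"
    unfolding fC'_def using sum_upd_diff[of c' "{1..m}" lam fC f] c' I4 by simp
  have "st' = (fS', dg', fC', tot + f)" unfolding st'eq fS'_def dg'_def fC'_def by simp
  then show ?thesis unfolding ginv_def prod.case using J1 J2 J3 J4 by blast
qed

lemma ginv_reach:
  assumes "(greedy_step n m)\<^sup>*\<^sup>* st0 st" "ginv n m U lam d st0"
  shows "ginv n m U lam d st"
  using assms
proof (induction rule: rtranclp_induct)
  case base then show ?case by simp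
next
  case (step y z)
  then show ?case by (cases y) (auto intro: ginv_step)
qed

lemma final_bound:
  assumes inv: "ginv n m U lam d (fS, dg, fC, out)"
    and tm: "\<not> greedy_loop_cond n m (fS, dg, fC, out)"
    and dpos: "\<forall>s\<in>{1..n}. d s \<ge> 1"
    and feas: "jam_feasible n m U lam d Z"
  shows "jam_obj n m Z \<le> 2 * out"
proof -
  have I1: "\<forall>s\<in>{1..n}. 0 \<le> fS s \<and> fS s \<le> U s \<and> dg s \<le> d s \<and>
        (\<forall>c\<in>{1..m}. fS s > 0 \<longrightarrow> real (d s - dg s) * fC c \<le> U s - fS s)"
    and I2: "\<forall>c\<in>{1..m}. 0 \<le> fC c \<and> fC c \<le> lam c"
    and I3: "out = (\<Sum>s\<in>{1..n}. U s - fS s)"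
    and I4: "out = (\<Sum>c\<in>{1..m}. lam c - fC c)"
    using inv unfolding ginv_def by auto
  have F1: "\<forall>s\<in>{1..n}. (\<Sum>c\<in>{1..m}. Z s c) \<le> U s"
    and F2: "\<forall>c\<in>{1..m}. (\<Sum>s\<in>{1..n}. Z s c) \<le> lam c"
    and F3: "\<forall>s\<in>{1..n}. (\<Sum>c\<in>{1..m}. (if Z s c > 0 then 1 else 0 :: nat)) \<le> d s"
    and F4: "\<forall>s\<in>{1..n}. \<forall>c\<in>{1..m}. Z s c \<ge> 0"
    using feas unfolding jam_feasible_def by auto
  have T: "\<And>s c. s \<in> {1..n} \<Longrightarrow> c \<in> {1..m} \<Longrightarrow> fS s > 0 \<Longrightarrow> fC c > 0 \<Longrightarrow> dg s = 0"
  proof (rule ccontr)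
    fix s c assume s: "s \<in> {1..n}" and c: "c \<in> {1..m}" and a: "fS s > 0" "fC c > 0" "dg s \<noteq> 0"
    then have "fS s * real (dg s) * fC c > 0" by simp
    then show False using tm s c unfolding greedy_loop_cond_def by auto
  qed
  define B where "B s = U s - fS s" for s
  have B0: "\<And>s. s \<in> {1..n} \<Longrightarrow> B s \<ge> 0" using I1 unfolding B_def by auto
  have key: "\<And>s c. s \<in> {1..n} \<Longrightarrow> c \<in> {1..m} \<Longrightarrow> fS s > 0 \<Longrightarrow> real (d s) * fC c \<le> B s"
  proof -
    fix s c assume s: "s \<in> {1..n}" and c: "c \<in> {1..m}" and p: "fS s > 0"
    show "real (d s) * fC c \<le> B s"
    proof (cases "fC c > 0")
      case True
      then have "dg s = 0" using T s c p by blast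
      then show ?thesis using I1 s c p unfolding B_def by auto
    next
      case False
      then have "fC c = 0" using I2 c by force
      then show ?thesis using B0 s by simp
    qed
  qed
  define w where "w s c = (if fS s > 0 then Z s c else 0)" for s c
  define g where "g s c = (if fS s > 0 \<and> Z s c > 0 then fC c else 0)" for s c
  have A1: "\<And>s. s \<in> {1..n} \<Longrightarrow> (\<Sum>c\<in>{1..m}. Z s c - w s c) \<le> (if fS s > 0 then 0 else B s)"
  proof -
    fix s assume s: "s \<in> {1..n}"
    show "(\<Sum>c\<in>{1..m}. Z s c - w s c) \<le> (if fS s > 0 then 0 else B s)"
    proof (cases "fS s > 0")
      case True then show ?thesis unfolding w_def by simp
    next
      case False
      then have "fS s = 0" using I1 s by force
      then show ?thesis using False F1 s unfolding w_def B_def by simp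
    qed
  qed
  have A2: "\<And>c. c \<in> {1..m} \<Longrightarrow> (\<Sum>s\<in>{1..n}. w s c) \<le> (lam c - fC c) + (\<Sum>s\<in>{1..n}. g s c)"
  proof -
    fix c assume c: "c \<in> {1..m}"
    have g0: "\<And>s. g s c \<ge> 0" using I2 c unfolding g_def by auto
    show "(\<Sum>s\<in>{1..n}. w s c) \<le> (lam c - fC c) + (\<Sum>s\<in>{1..n}. g s c)"
    proof (cases "\<exists>s\<in>{1..n}. fS s > 0 \<and> Z s c > 0")
      case True
      then obtain s0 where s0: "s0 \<in> {1..n}" "fS s0 > 0" "Z s0 c > 0" by blast
      have "(\<Sum>s\<in>{1..n}. w s c) \<le> (\<Sum>s\<in>{1..n}. Z s c)"
        by (rule sum_mono) (use F4 c in \<open>auto simp: w_def\<close>)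
      also have "\<dots> \<le> lam c" using F2 c by blast
      also have "\<dots> = (lam c - fC c) + g s0 c" using s0 unfolding g_def by simp
      also have "g s0 c \<le> (\<Sum>s\<in>{1..n}. g s c)"
        by (rule member_le_sum) (use s0 g0 in auto)
      then have "(lam c - fC c) + g s0 c \<le> (lam c - fC c) + (\<Sum>s\<in>{1..n}. g s c)" by simp
      finally show ?thesis .
    next
      case False
      have "(\<Sum>s\<in>{1..n}. w s c) \<le> (\<Sum>s\<in>{1..n}. 0)"
        by (rule sum_mono) (use False in \<open>auto simp: w_def\<close>)
      moreover have "0 \<le> (\<Sum>s\<in>{1..n}. g s c)" by (rule sum_nonneg) (use g0 in auto)
      moreover have "fC c \<le> lam c" using I2 c by blast
      ultimately show ?thesis by simp
    qed
  qed
  have A3: "\<And>s. s \<in> {1..n} \<Longrightarrow> (\<Sum>c\<in>{1..m}. g s c) \<le> (if fS s > 0 then B s else 0)"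
  proof -
    fix s assume s: "s \<in> {1..n}"
    show "(\<Sum>c\<in>{1..m}. g s c) \<le> (if fS s > 0 then B s else 0)"
    proof (cases "fS s > 0")
      case False then show ?thesis unfolding g_def by simp
    next
      case True
      have dp: "real (d s) \<ge> 1" using dpos s by simp
      have "(\<Sum>c\<in>{1..m}. g s c) \<le> (\<Sum>c\<in>{1..m}. (if Z s c > 0 then 1 else 0) * (B s / real (d s)))"
      proof (rule sum_mono)
        fix c assume c: "c \<in> {1..m}"
        have "real (d s) * fC c \<le> B s" using key s c True by blast
        then have "fC c \<le> B s / real (d s)" using dp by (simp add: field_simps)
        then show "g s c \<le> (if Z s c > 0 then 1 else 0) * (B s / real (d s))"
          unfolding g_def using True by simp
      qed
      also have "\<dots> = real (\<Sum>c\<in>{1..m}. (if Z s c > 0 then 1 else 0 :: nat)) * (B s / real (d s))"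
      proof -
        have "real (\<Sum>c\<in>{1..m}. (if Z s c > 0 then 1 else 0 :: nat)) = (\<Sum>c\<in>{1..m}. (if Z s c > 0 then 1 else 0 :: real))"
          unfolding of_nat_sum by (rule sum.cong) auto
        show ?thesis unfolding \<open>real _ = _\<close> sum_distrib_right by (rule refl)
      qed
      also have "\<dots> \<le> real (d s) * (B s / real (d s))"
      proof (rule mult_right_mono)
        have "(\<Sum>c\<in>{1..m}. (if Z s c > 0 then 1 else 0 :: nat)) \<le> d s" using F3 s by blast
        then show "real (\<Sum>c\<in>{1..m}. (if Z s c > 0 then 1 else 0 :: nat)) \<le> real (d s)"
          by (simp only: of_nat_le_iff)
        show "0 \<le> B s / real (d s)" using B0[OF s] by simp
      qed
      also have "\<dots> = B s" using dp by simp
      finally show ?thesis using True by simp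
    qed
  qed
  have "jam_obj n m Z = (\<Sum>s\<in>{1..n}. \<Sum>c\<in>{1..m}. Z s c - w s c) + (\<Sum>s\<in>{1..n}. \<Sum>c\<in>{1..m}. w s c)"
    unfolding jam_obj_def by (simp add: sum.distrib[symmetric] sum_subtractf)
  also have "(\<Sum>s\<in>{1..n}. \<Sum>c\<in>{1..m}. w s c) = (\<Sum>c\<in>{1..m}. \<Sum>s\<in>{1..n}. w s c)"
    by (rule sum.swap)
  also have "\<dots> \<le> (\<Sum>c\<in>{1..m}. (lam c - fC c) + (\<Sum>s\<in>{1..n}. g s c))"
    by (rule sum_mono) (rule A2)
  also have "\<dots> = out + (\<Sum>s\<in>{1..n}. \<Sum>c\<in>{1..m}. g s c)"
    using I4 by (simp add: sum.distrib sum.swap[of g])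
  also have "(\<Sum>s\<in>{1..n}. \<Sum>c\<in>{1..m}. Z s c - w s c) \<le> (\<Sum>s\<in>{1..n}. (if fS s > 0 then 0 else B s))"
    by (rule sum_mono) (rule A1)
  also have "(\<Sum>s\<in>{1..n}. \<Sum>c\<in>{1..m}. g s c) \<le> (\<Sum>s\<in>{1..n}. (if fS s > 0 then B s else 0))"
    by (rule sum_mono) (rule A3)
  finally have "jam_obj n m Z \<le> (\<Sum>s\<in>{1..n}. (if fS s > 0 then 0 else B s)) + (out + (\<Sum>s\<in>{1..n}. (if fS s > 0 then B s else 0)))"
    by simp
  also have "\<dots> = out + (\<Sum>s\<in>{1..n}. B s)"
    by (simp add: sum.distrib[symmetric] algebra_simps if_distrib cong: if_cong)
  also have "\<dots> = 2 * out" using I3 unfolding B_def by simp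
  finally show ?thesis .
qed

theorem theorem2:
  fixes n m :: nat and U lam :: "nat \<Rightarrow> real" and d :: "nat \<Rightarrow> nat"
    and fS :: "nat \<Rightarrow> real" and dg :: "nat \<Rightarrow> nat" and fC :: "nat \<Rightarrow> real" and out :: real
  assumes "\<forall>s\<in>{1..n}. U s > 0"
    and "\<forall>s\<in>{1..n}. d s \<ge> 1"
    and "\<forall>c\<in>{1..m}. lam c \<ge> 0"
    and "(greedy_step n m)\<^sup>*\<^sup>* (greedy_init U lam d) (fS, dg, fC, out)"
    and "\<not> greedy_loop_cond n m (fS, dg, fC, out)"
  shows "out \<ge> JAM_opt n m U lam d / 2"
proof -
  have inv: "ginv n m U lam d (fS, dg, fC, out)"
    using ginv_reach[OF assms(4) ginv_init[OF assms(1) assms(3)]] .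
  have ne: "{jam_obj n m Z | Z. jam_feasible n m U lam d Z} \<noteq> {}"
  proof -
    have "jam_feasible n m U lam d (\<lambda>s c. 0)"
      using assms(1,3) unfolding jam_feasible_def by (auto simp: less_imp_le sum_nonneg)
    then show ?thesis by blast
  qed
  have "JAM_opt n m U lam d \<le> 2 * out"
    unfolding JAM_opt_def
    by (rule cSup_least[OF ne]) (use final_bound[OF inv assms(5) assms(2)] in blast)
  then show ?thesis by simp
qed

end
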